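(* For every field $F$, $P(F)\leq m_F$.
   Context: $P(F)\in\mathbb Z_{\geq1}\cup\{\infty\}$ is the smallest $p$ such that every sum of squares in $F$ is a sum of $p$ squares ($\infty$ if no such $p$ exists). $m_F\in\mathbb Z_{\geq1}\cup\{\infty\}$ is the smallest $m$ such that for every $n$, every subspace $V\subseteq F^n$ of dimension $\geq m$ on which the restriction of the quadratic form $q(x)=x_1^2+\dots+x_n^2$ is non-singular (i.e. $x\mapsto B_q(x,-)|_V$ is an isomorphism $V\to V^*$, where $B_q(x,y)=q(x+y)-q(x)-q(y)$) contains a vector $v$ with $q(v)=1$. *)

theory Defs
  imports Main "HOL-Library.Extended_Nat" "HOL-Library.FuncSet" "HOL-Library.Function_Algebras"
begin

text \<open>Vectors of F^n are represented as functions nat => F vanishing outside {0..<n}.\<close>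

definition vecs :: "nat \<Rightarrow> (nat \<Rightarrow> 'a::field) set" where
  "vecs n = {x. \<forall>i\<ge>n. x i = 0}"

definition vscale :: "'a::field \<Rightarrow> (nat \<Rightarrow> 'a) \<Rightarrow> (nat \<Rightarrow> 'a)" where
  "vscale c x = (\<lambda>i. c * x i)"

definition qf :: "nat \<Rightarrow> (nat \<Rightarrow> 'a::field) \<Rightarrow> 'a" where
  "qf n x = (\<Sum>i<n. (x i)^2)"

definition Bq :: "nat \<Rightarrow> (nat \<Rightarrow> 'a::field) \<Rightarrow> (nat \<Rightarrow> 'a) \<Rightarrow> 'a" where
  "Bq n x y = qf n (x + y) - qf n x - qf n y"

definition dual_space :: "(nat \<Rightarrow> 'a::field) set \<Rightarrow> ((nat \<Rightarrow> 'a) \<Rightarrow> 'a) set" where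
  "dual_space V = {f. f \<in> extensional V \<and>
      (\<forall>a\<in>V. \<forall>b\<in>V. f (a + b) = f a + f b) \<and>
      (\<forall>c. \<forall>a\<in>V. f (vscale c a) = c * f a)}"

definition nonsingular_on :: "nat \<Rightarrow> (nat \<Rightarrow> 'a::field) set \<Rightarrow> bool" where
  "nonsingular_on n V \<longleftrightarrow> bij_betw (\<lambda>x. restrict (Bq n x) V) V (dual_space V)"

definition sum_of_squares :: "'a::field \<Rightarrow> bool" where
  "sum_of_squares a \<longleftrightarrow> (\<exists>k (b::nat \<Rightarrow> 'a). a = (\<Sum>i<k. (b i)^2))"

definition sum_of_p_squares :: "nat \<Rightarrow> 'a::field \<Rightarrow> bool" where
  "sum_of_p_squares p a \<longleftrightarrow> (\<exists>b::nat \<Rightarrow> 'a. a = (\<Sum>i<p. (b i)^2))"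

text \<open>Pythagoras number P(F); Inf of the empty set of enat is \<infinity>.\<close>

definition pythagoras_number :: "'a::field itself \<Rightarrow> enat" where
  "pythagoras_number (_::'a itself) =
     Inf {enat p | p. p \<ge> 1 \<and> (\<forall>a::'a. sum_of_squares a \<longrightarrow> sum_of_p_squares p a)}"

definition m_property :: "'a::field itself \<Rightarrow> nat \<Rightarrow> bool" where
  "m_property (_::'a itself) m \<longleftrightarrow>
     (\<forall>n (V::(nat \<Rightarrow> 'a) set).
        V \<subseteq> vecs n \<and> module.subspace vscale V \<and> vector_space.dim vscale V \<ge> m
        \<and> nonsingular_on n V \<longrightarrow> (\<exists>v\<in>V. qf n v = 1))"

definition m_F :: "'a::field itself \<Rightarrow> enat" where
  "m_F T = Inf {enat m | m. m \<ge> 1 \<and> m_property T m}"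

end

theory Submission imports Defs begin

definition ip :: "nat \<Rightarrow> (nat \<Rightarrow> 'a::field) \<Rightarrow> (nat \<Rightarrow> 'a) \<Rightarrow> 'a" where
  "ip n x y = (\<Sum>i<n. x i * y i)"

lemma Bq_ip: "Bq n x y = 2 * ip n x y"
  unfolding Bq_def qf_def ip_def
  by (simp add: power2_eq_square sum_distrib_left algebra_simps flip: sum.distrib sum_subtractf)

lemma qf_ip: "qf n x = ip n x x"
  unfolding qf_def ip_def by (simp add: power2_eq_square)

lemma ip_sym: "ip n x y = ip n y x"
  unfolding ip_def by (simp add: mult.commute)

lemma ip_add: "ip n (x + y) z = ip n x z + ip n y z"
  unfolding ip_def by (simp add: algebra_simps sum.distrib)

lemma ip_scale: "ip n (vscale c x) z = c * ip n x z"
  unfolding ip_def vscale_def by (simp add: algebra_simps sum_distrib_left)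

lemma ip_zero: "ip n 0 z = 0"
  unfolding ip_def by simp

lemma vs: "vector_space (vscale :: 'a::field \<Rightarrow> (nat \<Rightarrow> 'a) \<Rightarrow> _)"
  by unfold_locales (auto simp: vscale_def algebra_simps)

lemma ip_sum: "ip n (\<Sum>v\<in>t. vscale (u v) v) z = (\<Sum>v\<in>t. u v * ip n v z)"
proof (induction t rule: infinite_finite_induct)
  case (insert x F)
  show ?case by (simp only: sum.insert[OF insert(1,2)] ip_add ip_scale insert(3))
next
  case (infinite A)
  show ?case by (simp only: sum.infinite[OF infinite] ip_zero)
qed (simp only: sum.empty ip_zero)

lemma orth_coeff:
  assumes "finite W" "w \<in> W" "\<forall>v\<in>W. ip n v v = s"
    "\<forall>v\<in>W. \<forall>v'\<in>W. v \<noteq> v' \<longrightarrow> ip n v v' = 0" "t \<subseteq> W" "finite t"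
  shows "ip n (\<Sum>v\<in>t. vscale (d v) v) w = (if w \<in> t then d w * s else 0)"
proof -
  have "ip n (\<Sum>v\<in>t. vscale (d v) v) w = (\<Sum>v\<in>t. d v * ip n v w)" by (rule ip_sum)
  also have "\<dots> = (\<Sum>v\<in>t. if v = w then d w * s else 0)"
    by (rule sum.cong) (use assms in auto)
  also have "\<dots> = (if w \<in> t then d w * s else 0)"
    using assms by (simp add: sum.delta)
  finally show ?thesis .
qed

lemma dual_sum:
  assumes vsp: "module.subspace vscale V" and f: "f \<in> dual_space V" and t: "finite t" "t \<subseteq> V"
  shows "f (\<Sum>v\<in>t. vscale (u v) v) = (\<Sum>v\<in>t. u v * f v)"
  using t
proof (induction t rule: finite_induct)
  case empty
  interpret vs: vector_space "vscale :: 'a \<Rightarrow> (nat \<Rightarrow> 'a) \<Rightarrow> _" by (rule vs)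
  have "0 \<in> V" using vsp vs.subspace_0 by blast
  have "vscale 0 (0::nat\<Rightarrow>'a) = 0" by (simp add: vscale_def zero_fun_def)
  then have "f 0 = f (vscale 0 0)" by simp
  also have "\<dots> = 0 * f 0" using f \<open>0 \<in> V\<close> unfolding dual_space_def by blast
  finally have "f 0 = 0" by simp
  then show ?case by (simp only: sum.empty)
next
  case (insert x F)
  interpret vs: vector_space "vscale :: 'a \<Rightarrow> (nat \<Rightarrow> 'a) \<Rightarrow> _" by (rule vs)
  have xV: "x \<in> V" and FV: "F \<subseteq> V" using insert by auto
  have s1: "vscale (u x) x \<in> V" using vsp xV vs.subspace_scale by blast
  have s2: "(\<Sum>v\<in>F. vscale (u v) v) \<in> V"
    using vsp FV by (intro vs.subspace_sum) (auto intro: vs.subspace_scale)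
  have "f (\<Sum>v\<in>insert x F. vscale (u v) v) = f (vscale (u x) x + (\<Sum>v\<in>F. vscale (u v) v))"
    by (simp only: sum.insert[OF insert(1,2)])
  also have "\<dots> = f (vscale (u x) x) + f (\<Sum>v\<in>F. vscale (u v) v)"
    using f s1 s2 unfolding dual_space_def by blast
  also have "\<dots> = u x * f x + (\<Sum>v\<in>F. u v * f v)"
    using f xV insert FV unfolding dual_space_def by auto
  finally show ?case by (simp only: sum.insert[OF insert(1,2)])
qed

lemma main_lemma:
  fixes W :: "(nat \<Rightarrow> 'a::field) set"
  assumes two: "(2::'a) \<noteq> 0" and mp: "m_property TYPE('a) m"
    and fin: "finite W" and cardW: "card W = m" and Wn: "W \<subseteq> vecs n"
    and norm: "\<forall>v\<in>W. ip n v v = s" and s0: "s \<noteq> 0"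
    and orth: "\<forall>v\<in>W. \<forall>v'\<in>W. v \<noteq> v' \<longrightarrow> ip n v v' = 0"
  shows "\<exists>c. 1 = s * (\<Sum>v\<in>W. (c v)^2)"
proof -
  interpret vs: vector_space "vscale :: 'a \<Rightarrow> (nat \<Rightarrow> 'a) \<Rightarrow> _" by (rule vs)
  define V where "V = vs.span W"
  have Vform: "V = range (\<lambda>u. \<Sum>v\<in>W. vscale (u v) v)"
    unfolding V_def by (rule vs.span_finite[OF fin])
  have oc: "\<And>d w. w \<in> W \<Longrightarrow> ip n (\<Sum>v\<in>W. vscale (d v) v) w = d w * s"
    using orth_coeff[OF fin _ norm orth order_refl fin] by simp
  have sub: "vs.subspace V" unfolding V_def by simp
  have vecs_sub: "vs.subspace (vecs n)"
    unfolding vs.subspace_def vecs_def by (auto simp: vscale_def)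
  have Vn: "V \<subseteq> vecs n" unfolding V_def by (rule vs.span_minimal[OF Wn vecs_sub])
  have indep: "vs.independent W"
    unfolding vs.independent_explicit_module
  proof (intro allI impI)
    fix t u v assume t: "finite t" "t \<subseteq> W" "(\<Sum>v\<in>t. vscale (u v) v) = 0" "v \<in> t"
    have "ip n (\<Sum>v\<in>t. vscale (u v) v) v = u v * s"
      using orth_coeff[OF fin _ norm orth t(2) t(1), of v u] t by auto
    then have "u v * s = 0" using t(3) by (simp add: ip_zero)
    then show "u v = 0" using s0 by simp
  qed
  have dimV: "vs.dim V = m" unfolding V_def using vs.dim_span_eq_card_independent[OF indep] cardW by simp
  have WV: "W \<subseteq> V" unfolding V_def by (rule vs.span_superset)
  have Bq_form: "Bq n (\<Sum>v\<in>W. vscale (c v) v) (\<Sum>v\<in>W. vscale (d v) v) = 2 * s * (\<Sum>v\<in>W. c v * d v)" for c d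
  proof -
    have "Bq n (\<Sum>v\<in>W. vscale (c v) v) (\<Sum>v\<in>W. vscale (d v) v) = 2 * (\<Sum>v\<in>W. c v * ip n v (\<Sum>v\<in>W. vscale (d v) v))"
      by (simp add: Bq_ip ip_sum)
    also have "\<dots> = 2 * (\<Sum>v\<in>W. c v * (d v * s))"
      by (intro arg_cong[where f="\<lambda>x. 2 * x"] sum.cong refl) (simp add: ip_sym[of n _ "sum _ _"] oc)
    finally show ?thesis by (simp add: sum_distrib_left sum_distrib_right algebra_simps)
  qed
  have ns: "nonsingular_on n V"
    unfolding nonsingular_on_def bij_betw_def
  proof (intro conjI)
    show "inj_on (\<lambda>x. restrict (Bq n x) V) V"
    proof (rule inj_onI)
      fix x y assume xV: "x \<in> V" and yV: "y \<in> V" and eq: "restrict (Bq n x) V = restrict (Bq n y) V"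
      obtain c where xc: "x = (\<Sum>v\<in>W. vscale (c v) v)" using xV Vform by auto
      obtain d where yd: "y = (\<Sum>v\<in>W. vscale (d v) v)" using yV Vform by auto
      have "c w = d w" if "w \<in> W" for w
      proof -
        have "restrict (Bq n x) V w = restrict (Bq n y) V w" using eq by simp
        then have "Bq n x w = Bq n y w" using WV that by auto
        then have "2 * (c w * s) = 2 * (d w * s)" using that by (simp add: Bq_ip xc yd oc)
        then show ?thesis using two s0 by simp
      qed
      then show "x = y" unfolding xc yd by (intro sum.cong) auto
    qed
    show "(\<lambda>x. restrict (Bq n x) V) ` V = dual_space V"
    proof (intro equalityI subsetI)
      fix g assume "g \<in> (\<lambda>x. restrict (Bq n x) V) ` V"
      then obtain x where g: "g = restrict (Bq n x) V" by auto
      have add: "Bq n x (a + b) = Bq n x a + Bq n x b" for a b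
        by (simp add: Bq_ip ip_sym[of n x] ip_add algebra_simps)
      have sc: "Bq n x (vscale c a) = c * Bq n x a" for c a
        by (simp add: Bq_ip ip_sym[of n x] ip_scale algebra_simps)
      have "\<forall>a\<in>V. \<forall>b\<in>V. restrict (Bq n x) V (a + b) = restrict (Bq n x) V a + restrict (Bq n x) V b"
        using add sub vs.subspace_add by simp
      moreover have "\<forall>c. \<forall>a\<in>V. restrict (Bq n x) V (vscale c a) = c * restrict (Bq n x) V a"
        using sc sub vs.subspace_scale by simp
      ultimately show "g \<in> dual_space V" unfolding dual_space_def g by simp
    next
      fix f assume f: "f \<in> dual_space V"
      define c where "c w = f w / (2 * s)" for w
      define x where "x = (\<Sum>v\<in>W. vscale (c v) v)"
      have xV: "x \<in> V" unfolding x_def Vform by blast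
      have "restrict (Bq n x) V = f"
      proof (rule ext)
        fix z show "restrict (Bq n x) V z = f z"
        proof (cases "z \<in> V")
          case True
          then obtain d where zd: "z = (\<Sum>v\<in>W. vscale (d v) v)" using Vform by auto
          have "f z = (\<Sum>v\<in>W. d v * f v)" unfolding zd using dual_sum[OF sub f fin WV] .
          moreover have "Bq n x z = 2 * s * (\<Sum>v\<in>W. c v * d v)" unfolding x_def zd by (rule Bq_form)
          moreover have "2 * s * (\<Sum>v\<in>W. c v * d v) = (\<Sum>v\<in>W. d v * f v)"
            unfolding c_def using two s0 by (simp add: sum_distrib_left field_simps)
          ultimately show ?thesis using True by simp
        next
          case False
          then show ?thesis using f unfolding dual_space_def extensional_def by auto
        qed
      qed
      then show "f \<in> (\<lambda>x. restrict (Bq n x) V) ` V" using xV by blast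
    qed
  qed
  obtain v where vV: "v \<in> V" and qv: "qf n v = 1"
  proof -
    have "\<exists>v\<in>V. qf n v = 1"
      using mp[unfolded m_property_def, rule_format, of V n] Vn sub dimV ns by simp
    then show ?thesis using that by blast
  qed
  obtain c where vc: "v = (\<Sum>v\<in>W. vscale (c v) v)" using vV Vform by auto
  have "qf n v = (\<Sum>w\<in>W. c w * (c w * s))"
    unfolding qf_ip vc ip_sum
    by (intro sum.cong refl) (simp add: ip_sym[of n _ "sum _ _"] oc)
  then have "1 = s * (\<Sum>w\<in>W. (c w)^2)" using qv
    by (simp add: sum_distrib_left power2_eq_square algebra_simps)
  then show ?thesis by blast
qed


lemma char2_square:
  fixes b :: "nat \<Rightarrow> 'a::field"
  assumes "(2::'a) = 0"
  shows "(\<Sum>i<k. (b i)^2) = (\<Sum>i<k. b i)^2"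
proof (induction k)
  case (Suc k)
  have "(\<Sum>i<Suc k. b i)^2 = (\<Sum>i<k. b i)^2 + 2 * (\<Sum>i<k. b i) * b k + (b k)^2"
    by (simp add: power2_sum)
  then show ?case using Suc assms by simp
qed simp

lemma block_ip:
  fixes \<beta> :: "nat \<Rightarrow> 'a::field"
  assumes k: "k > 0" and j: "j < m" and j': "j' < m"
  defines "w \<equiv> \<lambda>j i. if j*k \<le> i \<and> i < j*k + k then \<beta> (i - j*k) else 0"
  shows "ip (m*k) (w j) (w j') = (if j = j' then (\<Sum>r<k. (\<beta> r)^2) else 0)"
proof (cases "j = j'")
  case False
  have z: "w j i * w j' i = 0" for i
  proof (cases "j*k \<le> i \<and> i < j*k + k \<and> j'*k \<le> i \<and> i < j'*k + k")
    case True
    then have "j*k < (j'+1)*k" "j'*k < (j+1)*k" by auto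
    then have "j < j'+1" "j' < j+1" using mult_less_cancel2 by blast+
    then show ?thesis using False by simp
  next
    case False
    then show ?thesis unfolding w_def by auto
  qed
  show ?thesis unfolding ip_def using False by (simp add: z)
next
  case True
  have jk: "j*k + k \<le> m*k" using j
    by (metis add.commute mult_Suc mult_le_mono1 Suc_leI)
  have "ip (m*k) (w j) (w j') = (\<Sum>i<m*k. if j*k \<le> i \<and> i < j*k + k then (\<beta> (i - j*k))^2 else 0)"
    unfolding ip_def True w_def by (intro sum.cong refl) (simp add: power2_eq_square)
  also have "\<dots> = (\<Sum>i\<in>{i\<in>{..<m*k}. j*k \<le> i \<and> i < j*k + k}. (\<beta> (i - j*k))^2)"
    by (subst sum.inter_filter) auto
  also have "{i\<in>{..<m*k}. j*k \<le> i \<and> i < j*k + k} = {0 + j*k..<k + j*k}"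
    using jk by auto
  also have "(\<Sum>i\<in>{0 + j*k..<k + j*k}. (\<beta> (i - j*k))^2) = (\<Sum>i\<in>{0..<k}. (\<beta> i)^2)"
    by (simp only: sum.shift_bounds_nat_ivl) simp
  finally show ?thesis using True by (simp add: atLeast0LessThan)
qed

lemma sos_m:
  fixes a :: "'a::field" and k :: nat
  assumes m1: "m \<ge> 1" and mp: "m_property TYPE('a) m" and a: "a = (\<Sum>i<k. (b i)^2)"
  shows "sum_of_p_squares m a"
proof (cases "(2::'a) = 0")
  case True
  have "a = (\<Sum>i<k. b i)^2" unfolding a by (rule char2_square[OF True])
  also have "\<dots> = (\<Sum>i<m. (if i = 0 then (\<Sum>i<k. b i) else 0)^2)"
  proof -
    have "(\<Sum>i<m. (if i = 0 then (\<Sum>i<k. b i) else 0)^2) = (\<Sum>i<m. if i = 0 then (\<Sum>i<k. b i)^2 else 0)"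
      by (intro sum.cong) auto
    also have "\<dots> = (\<Sum>i<k. b i)^2" using m1 by (simp add: sum.delta)
    finally show ?thesis by simp
  qed
  finally have e: "a = (\<Sum>i<m. (if i = 0 then (\<Sum>i<k. b i) else 0)^2)" .
  show ?thesis unfolding sum_of_p_squares_def
    by (rule exI[where x="\<lambda>i. if i = 0 then (\<Sum>i<k. b i) else 0"]) (rule e)
next
  case two: False
  show ?thesis
  proof (cases "a = 0")
    case True
    then show ?thesis unfolding sum_of_p_squares_def by (intro exI[of _ "\<lambda>_. 0"]) simp
  next
    case a0: False
    have k: "k > 0" using a a0 by (cases k) auto
    define \<beta> where "\<beta> r = b r / a" for r
    define w where "w \<equiv> \<lambda>j i. if j*k \<le> i \<and> i < j*k + k then \<beta> (i - j*k) else (0::'a)"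
    define s where "s = 1 / a"
    have sb: "(\<Sum>r<k. (\<beta> r)^2) = s"
      unfolding \<beta>_def s_def using a a0 by (simp add: power_divide flip: sum_divide_distrib) (simp add: power2_eq_square)
    have ipw: "ip (m*k) (w j) (w j') = (if j = j' then s else 0)" if "j < m" "j' < m" for j j'
      using block_ip[OF k that, of \<beta>] sb unfolding w_def by simp
    have s0: "s \<noteq> 0" unfolding s_def using a0 by simp
    have inj: "inj_on w {..<m}"
    proof (rule inj_onI)
      fix j j' assume "j \<in> {..<m}" "j' \<in> {..<m}" "w j = w j'"
      then show "j = j'" using ipw[of j j] ipw[of j j'] s0 by (auto split: if_splits)
    qed
    define W where "W = w ` {..<m}"
    have cardW: "card W = m" unfolding W_def using card_image[OF inj] by simp
    have Wn: "W \<subseteq> vecs (m*k)"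
    proof
      fix v assume "v \<in> W"
      then obtain j where j: "j < m" "v = w j" unfolding W_def by auto
      have "j*k + k \<le> m*k" using j
        by (metis add.commute mult_Suc mult_le_mono1 Suc_leI)
      then show "v \<in> vecs (m*k)" unfolding vecs_def j w_def by auto
    qed
    have norm: "\<forall>v\<in>W. ip (m*k) v v = s" unfolding W_def using ipw by auto
    have orth: "\<forall>v\<in>W. \<forall>v'\<in>W. v \<noteq> v' \<longrightarrow> ip (m*k) v v' = 0" unfolding W_def using ipw by auto
    obtain c where c: "1 = s * (\<Sum>v\<in>W. (c v)^2)"
      using main_lemma[OF two mp _ cardW Wn norm s0 orth] W_def by auto
    have "(\<Sum>v\<in>W. (c v)^2) = (\<Sum>j<m. (c (w j))^2)"
      unfolding W_def using sum.reindex[OF inj] by simp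
    then have "a = (\<Sum>j<m. (c (w j))^2)" using c a0 unfolding s_def by (simp add: field_simps)
    then show ?thesis unfolding sum_of_p_squares_def by (intro exI[where x="\<lambda>j. c (w j)"])
  qed
qed

theorem proposition2p5:
  shows "pythagoras_number TYPE('a::field) \<le> m_F TYPE('a)"
  unfolding pythagoras_number_def m_F_def
proof (rule Inf_superset_mono)
  show "{enat m |m. 1 \<le> m \<and> m_property TYPE('a) m}
    \<subseteq> {enat p |p. 1 \<le> p \<and> (\<forall>a::'a. sum_of_squares a \<longrightarrow> sum_of_p_squares p a)}"
    using sos_m unfolding sum_of_squares_def by blast
qed

end
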